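(* Let $a, n \in \mathbb{N}$, $d = 2^a$, $\eta = 1/n$, and $j \ge n + a + 1$. Let $L_1 \subset L_2 \subset \dots \subset L_{n+2}$ be a chain of dyadic intervals with $L_i \in \mathcal{D}_{j-a-i+1}$, and for $i = 1, \dots, n+1$ let $P_i = L_{i+1} \setminus L_i$ be the dyadic brother of $L_i$ in $L_{i+1}$. Let $I_1, \dots, I_{d-1} \in \mathcal{D}_j$ be distinct intervals with $I_i \subset L_1$, and let $J_1, \dots, J_{n+1} \in \mathcal{D}_j$ with $J_i \subset P_i$. For $k = 0, \dots, n$ put $$\mathcal{C}(k) = \{I_1, \dots, I_{d-1}\} \cup \{J_{n-k+1}, \dots, J_{n+1}\}.$$ Then the sequence $\mathcal{C}(0) \subset \mathcal{C}(1) \subset \dots \subset \mathcal{C}(n)$ is increasing and: (A) There exists exactly one, up to permutation of the colours, $(\eta,d)$-homogeneous colouring $\mathcal{C}(0) = \mathcal{C}_1(0) \cup \dots \cup \mathcal{C}_d(0)$. (B) For each $1 \le k \le n-1$: given the $(\eta,d)$-homogeneous colouring $\mathcal{C}(k-1) = \mathcal{C}_1(k-1) \cup \dots \cup \mathcal{C}_d(k-1)$ obtained at stage $k-1$, there exists exactly one $(\eta,d)$-homogeneous colouring $\mathcal{C}(k) = \mathcal{C}_1(k) \cup \dots \cup \mathcal{C}_d(k)$ such that $\mathcal{C}_i(k-1) \subset \mathcal{C}_i(k)$ for all $1 \le i \le d$. (C) Given the $(\eta,d)$-homogeneous colouring $\mathcal{C}(n-1) = \mathcal{C}_1(n-1)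 \cup \dots \cup \mathcal{C}_d(n-1)$ obtained at stage $n-1$, there does not exist an $(\eta,d)$-homogeneous colouring $\mathcal{C}(n) = \mathcal{C}_1(n) \cup \dots \cup \mathcal{C}_d(n)$ such that $\mathcal{C}_i(n-1) \subset \mathcal{C}_i(n)$ for all $1 \le i \le d$.
   Context: $\mathcal{D}$ denotes the collection of dyadic subintervals of $[0,1]$ and $\mathcal{D}_m = \{I \in \mathcal{D} : |I| = 2^{-m}\}$. For a collection $\mathcal{A}$ of dyadic intervals and $L \in \mathcal{D}$, write $\mathcal{A} \cap L = \{I \in \mathcal{A} : I \subset L\}$, and $|\mathcal{A}|$ for its cardinality. A colouring of $\mathcal{A}$ with $d$ colours is a decomposition $\mathcal{A} = \mathcal{A}_1 \cup \dots \cup \mathcal{A}_d$ into pairwise disjoint (possibly empty) subcollections. For $\mathcal{A} \subset \mathcal{D}_j$, $d \in \mathbb{N}$ and $\eta > 0$, such a decomposition is called an $(\eta,d)$-homogeneous colouring if for every $L \in \mathcal{D}$ with $|L| \ge 2^{-j}$ one of the following holds: either $|\mathcal{A} \cap L| > d$ and $\eta \max_{1\le i\le d} |\mathcal{A}_i \cap L| \le \min_{1 \le i \le d} |\mathcal{A}_i \cap L|$; or $|\mathcal{A} \cap L| \le d$ and $|\mathcal{A}_i \cap L| \le 1$ for each $1 \le i \le d$. "Up to permutation" means up to relabelling the colours $1,\dots,d$. *)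

theory Defs
  imports Complex_Main
begin

text \<open>A dyadic subinterval of [0,1] of length 2^(-m) with left endpoint k 2^(-m)
  is encoded as the pair (m, k) with k < 2^m.\<close>

type_synonym dyadic = "nat \<times> nat"

definition dyadic_intervals :: "dyadic set" where
  "dyadic_intervals = {(m, k). k < 2 ^ m}"

definition Dlev :: "nat \<Rightarrow> dyadic set" where
  "Dlev m = {(m', k). m' = m \<and> k < 2 ^ m}"

text \<open>Containment I \<subseteq> L of dyadic intervals.\<close>
definition dsub :: "dyadic \<Rightarrow> dyadic \<Rightarrow> bool" where
  "dsub I L \<longleftrightarrow> fst L \<le> fst I \<and> snd I div 2 ^ (fst I - fst L) = snd L"

definition brother :: "dyadic \<Rightarrow> dyadic" where
  "brother I = (fst I, if even (snd I) then snd I + 1 else snd I - 1)"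

definition restr :: "dyadic set \<Rightarrow> dyadic \<Rightarrow> dyadic set" where
  "restr A L = {I \<in> A. dsub I L}"

definition colouring :: "nat \<Rightarrow> dyadic set \<Rightarrow> (nat \<Rightarrow> dyadic set) \<Rightarrow> bool" where
  "colouring d A C \<longleftrightarrow> (\<Union>i\<in>{1..d}. C i) = A \<and>
     (\<forall>i\<in>{1..d}. \<forall>i'\<in>{1..d}. i \<noteq> i' \<longrightarrow> C i \<inter> C i' = {})"

definition homogeneous :: "real \<Rightarrow> nat \<Rightarrow> nat \<Rightarrow> dyadic set \<Rightarrow> (nat \<Rightarrow> dyadic set) \<Rightarrow> bool" where
  "homogeneous \<eta> d j A C \<longleftrightarrow> A \<subseteq> Dlev j \<and> colouring d A C \<and>
     (\<forall>L\<in>dyadic_intervals. fst L \<le> j \<longrightarrow>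
        (card (restr A L) > d \<and>
           \<eta> * Max ((\<lambda>i. real (card (restr (C i) L))) ` {1..d})
             \<le> Min ((\<lambda>i. real (card (restr (C i) L))) ` {1..d}))
      \<or> (card (restr A L) \<le> d \<and> (\<forall>i\<in>{1..d}. card (restr (C i) L) \<le> 1)))"

definition perm_equiv :: "nat \<Rightarrow> (nat \<Rightarrow> dyadic set) \<Rightarrow> (nat \<Rightarrow> dyadic set) \<Rightarrow> bool" where
  "perm_equiv d C C' \<longleftrightarrow> (\<exists>\<sigma>. bij_betw \<sigma> {1..d} {1..d} \<and> (\<forall>i\<in>{1..d}. C' i = C (\<sigma> i)))"

definition extends_col :: "nat \<Rightarrow> (nat \<Rightarrow> dyadic set) \<Rightarrow> (nat \<Rightarrow> dyadic set) \<Rightarrow> bool" where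
  "extends_col d C C' \<longleftrightarrow> (\<forall>i\<in>{1..d}. C i \<subseteq> C' i)"

definition stage_chain :: "real \<Rightarrow> nat \<Rightarrow> nat \<Rightarrow> (nat \<Rightarrow> dyadic set)
    \<Rightarrow> (nat \<Rightarrow> nat \<Rightarrow> dyadic set) \<Rightarrow> nat \<Rightarrow> bool" where
  "stage_chain \<eta> d j Cc Cs k \<longleftrightarrow> homogeneous \<eta> d j (Cc 0) (Cs 0) \<and>
     (\<forall>m\<in>{1..k}. homogeneous \<eta> d j (Cc m) (Cs m) \<and> extends_col d (Cs (m - 1)) (Cs m))"

end

theory Submission
  imports Defs
begin

lemma dsub_refl: "dsub x x" by (simp add: dsub_def)

lemma dsub_trans: assumes "dsub x y" "dsub y z" shows "dsub x z"
proof -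
  have h: "fst y \<le> fst x" "snd x div 2^(fst x - fst y) = snd y" "fst z \<le> fst y"
     "snd y div 2^(fst y - fst z) = snd z" using assms by (auto simp: dsub_def)
  have e: "fst x - fst z = (fst x - fst y) + (fst y - fst z)" using h by simp
  have "snd x div 2^(fst x - fst z) = snd x div 2^(fst x - fst y) div 2^(fst y - fst z)"
    unfolding e by (simp add: power_add div_mult2_eq)
  then show ?thesis using h by (simp add: dsub_def)
qed

lemma dsub_nest: assumes "dsub x L" "dsub x L'" "fst L \<le> fst L'" shows "dsub L' L"
proof -
  have h: "fst L \<le> fst x" "snd x div 2^(fst x - fst L) = snd L" "fst L' \<le> fst x"
     "snd x div 2^(fst x - fst L') = snd L'" using assms by (auto simp: dsub_def)
  have e: "fst x - fst L = (fst x - fst L') + (fst L' - fst L)" using h assms(3) by simp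
  have "snd x div 2^(fst x - fst L) = snd x div 2^(fst x - fst L') div 2^(fst L' - fst L)"
    unfolding e by (simp add: power_add div_mult2_eq)
  then show ?thesis using h assms(3) by (simp add: dsub_def)
qed

lemma dsub_eq_lev: "dsub x y \<Longrightarrow> fst x = fst y \<Longrightarrow> x = y"
  by (simp add: dsub_def prod_eq_iff)

lemma brother_ne: "brother x \<noteq> x"
  by (cases "even (snd x)") (auto simp: brother_def prod_eq_iff elim: oddE)

lemma brother_disj: "dsub z x \<Longrightarrow> dsub z (brother x) \<Longrightarrow> False"
  using dsub_nest[of z x "brother x"] dsub_eq_lev[of "brother x" x] brother_ne[of x]
  by (simp add: brother_def)

lemma brother_parent: assumes "dsub x p" "fst x = fst p + 1" shows "dsub (brother x) p"
proof -
  have "snd x div 2 = snd p" using assms by (simp add: dsub_def)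
  moreover have "(if even (snd x) then snd x + 1 else snd x - 1) div 2 = snd x div 2"
    by (cases "even (snd x)") (auto elim!: evenE oddE)
  ultimately show ?thesis using assms by (simp add: dsub_def brother_def)
qed

lemma dsub_top: "x \<in> Dlev j \<Longrightarrow> dsub x (0,0)"
  by (auto simp: Dlev_def dsub_def)


locale P31 =
  fixes a n j :: nat and L I J :: "nat \<Rightarrow> dyadic"
  assumes a1: "a \<ge> 1" and n1: "n \<ge> 1" and jb: "j \<ge> n + a + 1"
    and Llev: "\<forall>i\<in>{1..n + 2}. L i \<in> Dlev (j + 1 - a - i)"
    and Lsub: "\<forall>i\<in>{1..n + 1}. dsub (L i) (L (i + 1))"
    and Iinj: "inj_on I {1..2^a - 1}"
    and Iin: "\<forall>i\<in>{1..2^a - 1}. I i \<in> Dlev j \<and> dsub (I i) (L 1)"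
    and Jin: "\<forall>i\<in>{1..n + 1}. J i \<in> Dlev j \<and> dsub (J i) (brother (L i))"
begin

abbreviation "dd \<equiv> (2::nat) ^ a"
abbreviation "X \<equiv> I ` {1..dd - 1}"
abbreviation "CC \<equiv> (\<lambda>k. I ` {1..dd - 1} \<union> J ` {n - k + 1..n + 1})"

lemma dd2: "dd \<ge> 2"
proof -
  have "(2::nat)^1 \<le> 2^a" using a1 by (rule power_increasing) simp
  then show ?thesis by simp
qed

lemma L_fst: assumes "i \<in> {1..n+2}" shows "fst (L i) = j + 1 - a - i \<and> L i \<in> dyadic_intervals"
proof -
  have "L i \<in> Dlev (j+1-a-i)" using Llev assms by blast
  then show ?thesis by (cases "L i") (auto simp: Dlev_def dyadic_intervals_def)
qed

lemma L_chain: assumes "1 \<le> i" "i \<le> i'" "i' \<le> n + 2" shows "dsub (L i) (L i')"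
  using assms(2,3)
proof (induction i' rule: dec_induct)
  case base show ?case by (rule dsub_refl)
next
  case (step m)
  have "dsub (L m) (L (m+1))" using Lsub step assms(1) by simp
  then show ?case using step dsub_trans by simp
qed

lemma P_sub: "i \<in> {1..n+1} \<Longrightarrow> dsub (brother (L i)) (L (i+1))"
  apply (rule brother_parent)
  using Lsub L_fst[of i] L_fst[of "i+1"] jb by auto

lemma I_in: "p \<in> {1..dd-1} \<Longrightarrow> m \<in> {1..n+2} \<Longrightarrow> dsub (I p) (L m)"
proof -
  assume p: "p \<in> {1..dd-1}" and m: "m \<in> {1..n+2}"
  have "dsub (I p) (L 1)" using Iin p by blast
  then show ?thesis using L_chain[of 1 m] m dsub_trans by auto
qed

lemma J_in: assumes "i \<in> {1..n+1}" "i + 1 \<le> m" "m \<le> n+2" shows "dsub (J i) (L m)"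
proof -
  have "dsub (J i) (brother (L i))" using Jin assms(1) by blast
  then have "dsub (J i) (L (i+1))" using P_sub[OF assms(1)] dsub_trans by blast
  then show ?thesis using L_chain[of "i+1" m] assms dsub_trans by simp
qed

lemma J_notin: assumes "i \<in> {1..n+1}" "1 \<le> m" "m \<le> i" shows "\<not> dsub (J i) (L m)"
proof
  assume "dsub (J i) (L m)"
  then have "dsub (J i) (L i)" using L_chain[of m i] assms dsub_trans by simp
  moreover have "dsub (J i) (brother (L i))" using Jin assms(1) by blast
  ultimately show False using brother_disj by blast
qed

lemma J_notX: "i \<in> {1..n+1} \<Longrightarrow> J i \<notin> X"
  using J_notin[of i i] I_in[of _ i] by auto

lemma J_inj: "inj_on J {1..n+1}"
proof (rule inj_onI)
  fix x y assume xy: "x \<in> {1..n+1}" "y \<in> {1..n+1}" "J x = J y"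
  show "x = y"
  proof (rule ccontr)
    assume "x \<noteq> y"
    then consider "x < y" | "y < x" by linarith
    then show False
    proof cases
      case 1 then show ?thesis using J_in[of x y] J_notin[of y y] xy by auto
    next
      case 2 then show ?thesis using J_in[of y x] J_notin[of x x] xy by auto
    qed
  qed
qed

lemma sep_aux: "i \<in> {1..n+1} \<Longrightarrow> dsub y (L i) \<Longrightarrow> dsub y Lx \<Longrightarrow> dsub (J i) Lx
   \<Longrightarrow> \<not> dsub (L 1) Lx \<Longrightarrow> False"
proof -
  assume i: "i \<in> {1..n+1}" and y: "dsub y (L i)" "dsub y Lx" and Ji: "dsub (J i) Lx"
    and nL: "\<not> dsub (L 1) Lx"
  show False
  proof (cases "fst Lx \<le> fst (L i)")
    case True
    then have "dsub (L i) Lx" by (rule dsub_nest[OF y(2) y(1)])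
    moreover have "dsub (L 1) (L i)" using L_chain[of 1 i] i by simp
    ultimately show False using nL dsub_trans[of "L 1" "L i" Lx] by simp
  next
    case False
    then have "dsub Lx (L i)" using dsub_nest[OF y(1) y(2)] by simp
    then show False using J_notin[of i i] i dsub_trans[OF Ji] by simp
  qed
qed

lemma sep: assumes "x \<in> X \<union> J ` {1..n+1}" "i \<in> {1..n+1}" "dsub (J i) Lx" "dsub x Lx"
  "\<not> dsub (L 1) Lx" shows "x = J i"
proof (rule ccontr)
  assume ne: "x \<noteq> J i"
  from assms(1) show False
  proof
    assume "x \<in> X"
    then obtain p where p: "p \<in> {1..dd-1}" "x = I p" by auto
    have "dsub x (L i)" using I_in[of p i] p assms(2) by simp
    then show False using sep_aux[OF assms(2) _ assms(4) assms(3) assms(5)] by blast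
  next
    assume "x \<in> J ` {1..n+1}"
    then obtain q where q: "q \<in> {1..n+1}" "x = J q" by auto
    then have "q \<noteq> i" using ne by auto
    then consider "q < i" | "i < q" by linarith
    then show False
    proof cases
      case 1
      have "dsub x (L i)" using J_in[of q i] q assms(2) 1 by simp
      then show False using sep_aux[OF assms(2) _ assms(4) assms(3) assms(5)] by blast
    next
      case 2
      have "dsub (J i) (L q)" using J_in[of i q] q assms(2) 2 by simp
      moreover have "dsub (J q) Lx" using assms(4) q(2) by simp
      ultimately show False using sep_aux[OF q(1) _ assms(3) _ assms(5)] by blast
    qed
  qed
qed

lemma card_X: "card X = dd - 1"
  using Iinj by (simp add: card_image)

lemma CC_sub: "CC m \<subseteq> Dlev j"
proof
  fix x assume "x \<in> CC m"
  then show "x \<in> Dlev j"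
  proof
    assume "x \<in> X" then show ?thesis using Iin by blast
  next
    assume "x \<in> J ` {n - m + 1..n + 1}" then show ?thesis using Jin by auto
  qed
qed

lemma fin_CC: "finite (CC m)" by simp


definition canon :: "nat \<Rightarrow> (nat \<Rightarrow> dyadic set) \<Rightarrow> nat \<Rightarrow> bool" where
  "canon m C c \<longleftrightarrow> c \<in> {1..dd} \<and> C c = J ` {n-m+1..n+1} \<and>
     (\<forall>i\<in>{1..dd}. i \<noteq> c \<longrightarrow> (\<exists>p\<in>{1..dd-1}. C i = {I p})) \<and> colouring dd (CC m) C"

lemma restr_mono: "A \<subseteq> B \<Longrightarrow> restr A Lx \<subseteq> restr B Lx"
  by (auto simp: restr_def)

lemma restr_Un: "restr (A \<union> B) Lx = restr A Lx \<union> restr B Lx"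
  by (auto simp: restr_def)

lemma Jset_disj: assumes S: "S \<subseteq> {1..n+1}" shows "X \<inter> J ` S = {}"
proof (rule equals0I)
  fix x assume "x \<in> X \<inter> J ` S"
  then obtain i where i: "i \<in> S" "x = J i" "x \<in> X" by blast
  then have "i \<in> {1..n+1}" using S by blast
  then show False using J_notX[of i] i by simp
qed

lemma Hom: assumes can: "canon m C c" and mn: "m + 1 \<le> n"
  shows "homogeneous (1 / real n) dd j (CC m) C"
proof -
  define A where "A = CC m"
  define S where "S = {n-m+1..n+1}"
  have S1: "S \<subseteq> {1..n+1}" unfolding S_def by auto
  have c: "c \<in> {1..dd}" and Cc: "C c = J ` S"
    and oth: "\<forall>i\<in>{1..dd}. i \<noteq> c \<longrightarrow> (\<exists>p\<in>{1..dd-1}. C i = {I p})"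
    and col: "colouring dd A C" using can unfolding canon_def A_def S_def by auto
  have AXC: "A = X \<union> C c" unfolding A_def Cc S_def by simp
  have finA: "finite A" unfolding A_def by simp
  have Csub: "\<forall>i\<in>{1..dd}. C i \<subseteq> A" using col unfolding colouring_def by blast
  have dsj: "X \<inter> C c = {}" using Jset_disj[OF S1] Cc by simp
  have cardS: "card S = m + 1" unfolding S_def using mn by simp
  have finS: "finite S" unfolding S_def by simp
  have cardCc: "card (C c) \<le> n" using card_image_le[OF finS, of J] cardS mn Cc by simp
  have oth1: "card (restr (C i) Lx) \<le> 1" if ii: "i \<in> {1..dd}" "i \<noteq> c" for i Lx
  proof -
    obtain p where "C i = {I p}" using oth ii by blast
    then have "restr (C i) Lx \<subseteq> {I p}" by (auto simp: restr_def)
    then have "card (restr (C i) Lx) \<le> card {I p}" by (rule card_mono[rotated]) simp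
    then show ?thesis by simp
  qed
  have subA: "restr (C i) Lx \<subseteq> restr A Lx" if "i \<in> {1..dd}" for i Lx
    using restr_mono Csub that by blast
  have finR: "finite (restr B Lx)" if BA: "B \<subseteq> A" for B Lx
  proof -
    have "restr B Lx \<subseteq> A" using BA by (auto simp: restr_def)
    then show ?thesis using finite_subset finA by blast
  qed
  have main: "(card (restr A Lx) > dd \<and>
           (1 / real n) * Max ((\<lambda>i. real (card (restr (C i) Lx))) ` {1..dd})
             \<le> Min ((\<lambda>i. real (card (restr (C i) Lx))) ` {1..dd}))
      \<or> (card (restr A Lx) \<le> dd \<and> (\<forall>i\<in>{1..dd}. card (restr (C i) Lx) \<le> 1))" for Lx
  proof (cases "dsub (L 1) Lx")
    case True
    have Xin: "restr X Lx = X"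
    proof -
      have "dsub x Lx" if xX: "x \<in> X" for x
      proof -
        obtain p where p: "p \<in> {1..dd-1}" "x = I p" using xX by blast
        have "dsub x (L 1)" using I_in[of p 1] p by simp
        then show ?thesis using dsub_trans[OF _ True] by blast
      qed
      then show ?thesis by (auto simp: restr_def)
    qed
    define t where "t = card (restr (C c) Lx)"
    have rA: "restr A Lx = X \<union> restr (C c) Lx" using AXC Xin restr_Un by simp
    have "X \<inter> restr (C c) Lx = {}" using dsj by (auto simp: restr_def)
    then have cardA: "card (restr A Lx) = (dd - 1) + t"
      unfolding rA t_def using card_X finR[of "C c"] AXC
      by (simp add: card_Un_disjoint)
    have "restr (C c) Lx \<subseteq> C c" by (auto simp: restr_def)
    moreover have "finite (C c)" using finA AXC by simp
    ultimately have "t \<le> card (C c)" unfolding t_def by (rule card_mono[rotated])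
    then have ti: "t \<le> n" using cardCc by simp
    have other: "card (restr (C i) Lx) = 1" if ii: "i \<in> {1..dd}" "i \<noteq> c" for i
    proof -
      obtain p where p: "p \<in> {1..dd-1}" "C i = {I p}" using oth ii by blast
      then have "I p \<in> X" by blast
      then have "dsub (I p) Lx" using Xin by (auto simp: restr_def)
      then have "restr (C i) Lx = {I p}" using p by (auto simp: restr_def)
      then show ?thesis by simp
    qed
    show ?thesis
    proof (cases "t \<ge> 2")
      case True
      let ?V = "(\<lambda>i. real (card (restr (C i) Lx))) ` {1..dd}"
      have fin: "finite ?V" "?V \<noteq> {}" using dd2 by auto
      have vals: "card (restr (C i) Lx) \<le> n \<and> card (restr (C i) Lx) \<ge> 1" if ii: "i \<in> {1..dd}" for i
      proof (cases "i = c")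
        case True then show ?thesis using ti \<open>t \<ge> 2\<close> t_def by simp
      next
        case False then show ?thesis using other[OF ii] n1 by simp
      qed
      have "Max ?V \<le> real n" using fin
        by (subst Max_le_iff) (use vals in auto)
      moreover have "Min ?V \<ge> 1" using fin
        by (subst Min_ge_iff) (use vals in auto)
      moreover have "real n > 0" using n1 by simp
      ultimately have "(1 / real n) * Max ?V \<le> 1"
        by (simp add: divide_le_eq)
      then have "(1 / real n) * Max ?V \<le> Min ?V" using \<open>Min ?V \<ge> 1\<close> by linarith
      moreover have "card (restr A Lx) > dd" using cardA True dd2 by simp
      ultimately show ?thesis by blast
    next
      case False
      then have "card (restr A Lx) \<le> dd" using cardA dd2 by simp
      moreover have "\<forall>i\<in>{1..dd}. card (restr (C i) Lx) \<le> 1"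
      proof
        fix i assume ii: "i \<in> {1..dd}"
        show "card (restr (C i) Lx) \<le> 1"
        proof (cases "i = c")
          case True then show ?thesis using False t_def by simp
        next
          case False then show ?thesis using other[OF ii] by simp
        qed
      qed
      ultimately show ?thesis by blast
    qed
  next
    case False
    have AJ: "A \<subseteq> X \<union> J ` {1..n+1}" using AXC Cc S1 by blast
    show ?thesis
    proof (cases "\<exists>i\<in>S. dsub (J i) Lx")
      case True
      then obtain i where i: "i \<in> S" "dsub (J i) Lx" by blast
      have "x = J i" if xr: "x \<in> restr A Lx" for x
      proof -
        have "x \<in> X \<union> J ` {1..n+1}" "dsub x Lx" using xr AJ by (auto simp: restr_def)
        moreover have "i \<in> {1..n+1}" using i(1) S1 by blast
        ultimately show ?thesis using sep[OF _ _ i(2) _ False] by blast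
      qed
      then have "restr A Lx \<subseteq> {J i}" by blast
      then have le1: "card (restr B Lx) \<le> 1" if BA: "restr B Lx \<subseteq> restr A Lx" for B
      proof -
        have "restr B Lx \<subseteq> {J i}" using BA \<open>restr A Lx \<subseteq> {J i}\<close> by blast
        then have "card (restr B Lx) \<le> card {J i}" by (rule card_mono[rotated]) simp
        then show ?thesis by simp
      qed
      have "card (restr A Lx) \<le> dd" using le1[of A] dd2 by simp
      moreover have "\<forall>i\<in>{1..dd}. card (restr (C i) Lx) \<le> 1" using le1 subA by blast
      ultimately show ?thesis by blast
    next
      case nJ: False
      have "restr (C c) Lx = {}" using nJ Cc by (auto simp: restr_def)
      then have "restr A Lx \<subseteq> X" using AXC restr_Un[of X "C c" Lx] by (auto simp: restr_def)
      then have "card (restr A Lx) \<le> card X" by (rule card_mono[rotated]) simp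
      then have "card (restr A Lx) \<le> dd - 1" using card_X by simp
      then have "card (restr A Lx) \<le> dd" by simp
      moreover have "\<forall>i\<in>{1..dd}. card (restr (C i) Lx) \<le> 1"
      proof
        fix i assume ii: "i \<in> {1..dd}"
        show "card (restr (C i) Lx) \<le> 1"
        proof (cases "i = c")
          case True then show ?thesis using \<open>restr (C c) Lx = {}\<close> by simp
        next
          case False then show ?thesis using oth1[OF ii] by simp
        qed
      qed
      ultimately show ?thesis by blast
    qed
  qed
  show ?thesis unfolding homogeneous_def
  proof (intro conjI ballI impI)
    show "CC m \<subseteq> Dlev j" by (rule CC_sub)
    show "colouring dd (CC m) C" using col A_def by simp
  next
    fix Lx assume "Lx \<in> dyadic_intervals" "fst Lx \<le> j"
    show "(card (restr (CC m) Lx) > dd \<and>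
           (1 / real n) * Max ((\<lambda>i. real (card (restr (C i) Lx))) ` {1..dd})
             \<le> Min ((\<lambda>i. real (card (restr (C i) Lx))) ` {1..dd}))
      \<or> (card (restr (CC m) Lx) \<le> dd \<and> (\<forall>i\<in>{1..dd}. card (restr (C i) Lx) \<le> 1))"
      using main[of Lx] unfolding A_def .
  qed
qed


lemma hom_at: assumes "homogeneous eta d j A C" "Lx \<in> dyadic_intervals" "fst Lx \<le> j"
  shows "(card (restr A Lx) > d \<and>
           eta * Max ((\<lambda>i. real (card (restr (C i) Lx))) ` {1..d})
             \<le> Min ((\<lambda>i. real (card (restr (C i) Lx))) ` {1..d}))
      \<or> (card (restr A Lx) \<le> d \<and> (\<forall>i\<in>{1..d}. card (restr (C i) Lx) \<le> 1))"
proof -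
  have "\<forall>L\<in>dyadic_intervals. fst L \<le> j \<longrightarrow>
        (card (restr A L) > d \<and>
           eta * Max ((\<lambda>i. real (card (restr (C i) L))) ` {1..d})
             \<le> Min ((\<lambda>i. real (card (restr (C i) L))) ` {1..d}))
      \<or> (card (restr A L) \<le> d \<and> (\<forall>i\<in>{1..d}. card (restr (C i) L) \<le> 1))"
    using assms(1) unfolding homogeneous_def by (elim conjE)
  then show ?thesis using assms(2,3) by blast
qed

lemma restr_all: "B \<subseteq> Dlev j \<Longrightarrow> restr B (0,0) = B"
  using dsub_top by (auto simp: restr_def)

lemma top_ok: "(0::nat,0::nat) \<in> dyadic_intervals" "fst (0::nat,0::nat) \<le> j"
  by (auto simp: dyadic_intervals_def)

lemma interval_split: assumes "m \<in> {1..n}"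
  shows "{n-m+1..n+1} = insert (n-m+1) {n-(m-1)+1..n+1}"
  using assms by auto

lemma Force:
  assumes m: "m \<in> {1..n}" and can: "canon (m-1) C c"
    and hom: "homogeneous eta dd j (CC m) C'" and ext: "extends_col dd C C'"
  shows "canon m C' c \<and> (\<forall>i\<in>{1..dd}. C' i = (if i = c then C c \<union> {J (n-m+1)} else C i))"
proof -
  define new where "new = J (n-m+1)"
  have k0: "n-m+1 \<in> {1..n+1}" using m by auto
  have CCm: "CC m = CC (m-1) \<union> {new}" unfolding new_def using interval_split[OF m] by auto
  have c: "c \<in> {1..dd}" and Cc: "C c = J ` {n-(m-1)+1..n+1}"
    and oth: "\<forall>i\<in>{1..dd}. i \<noteq> c \<longrightarrow> (\<exists>p\<in>{1..dd-1}. C i = {I p})"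
    and colC: "colouring dd (CC (m-1)) C" using can unfolding canon_def by auto
  have colC': "colouring dd (CC m) C'" using hom unfolding homogeneous_def by blast
  have UC: "(\<Union>i\<in>{1..dd}. C i) = CC (m-1)" using colC unfolding colouring_def by blast
  have UC': "(\<Union>i\<in>{1..dd}. C' i) = CC m" using colC' unfolding colouring_def by blast
  have dC': "\<And>i i'. i \<in> {1..dd} \<Longrightarrow> i' \<in> {1..dd} \<Longrightarrow> i \<noteq> i' \<Longrightarrow> C' i \<inter> C' i' = {}"
    using colC' unfolding colouring_def by blast
  have ext': "\<And>i. i \<in> {1..dd} \<Longrightarrow> C i \<subseteq> C' i" using ext unfolding extends_col_def by blast
  have st1: "C' i \<subseteq> C i \<union> {new}" if ii: "i \<in> {1..dd}" for i
  proof
    fix x assume x: "x \<in> C' i"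
    then have "x \<in> CC m" using UC' ii by blast
    show "x \<in> C i \<union> {new}"
    proof (cases "x = new")
      case False
      then have "x \<in> CC (m-1)" using \<open>x \<in> CC m\<close> CCm by blast
      then obtain i0 where i0: "i0 \<in> {1..dd}" "x \<in> C i0" using UC by blast
      then have "x \<in> C' i0" using ext' by blast
      then have "i0 = i" using dC'[OF ii i0(1)] x by blast
      then show ?thesis using i0 by blast
    qed simp
  qed
  have "new \<in> CC m" using CCm by blast
  then obtain i0 where i0: "i0 \<in> {1..dd}" "new \<in> C' i0" using UC' by blast
  have "i0 = c"
  proof (rule ccontr)
    assume ne: "i0 \<noteq> c"
    then obtain p where p: "p \<in> {1..dd-1}" "C i0 = {I p}" using oth i0 by blast
    have Ip: "I p \<in> C' i0" using ext' i0 p by blast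
    define Lm where "Lm = L (n-m+2)"
    have idx: "n-m+2 \<in> {1..n+2}" using m by auto
    have Lm: "Lm \<in> dyadic_intervals" "fst Lm \<le> j" using L_fst[OF idx] unfolding Lm_def by auto
    have "x \<in> X \<union> {new}" if xr: "x \<in> restr (CC m) Lm" for x
    proof -
      have x: "x \<in> CC m" "dsub x Lm" using xr by (auto simp: restr_def)
      show ?thesis
      proof (cases "x \<in> X")
        case False
        then obtain q where q: "q \<in> {n-m+1..n+1}" "x = J q" using x(1) by blast
        show ?thesis
        proof (cases "q = n-m+1")
          case False
          then have "n-m+2 \<le> q" using q(1) by auto
          then have "\<not> dsub (J q) Lm" unfolding Lm_def using J_notin[of q "n-m+2"] q(1) m by auto
          then show ?thesis using x q by simp
        qed (simp add: q new_def)
      qed simp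
    qed
    then have "restr (CC m) Lm \<subseteq> X \<union> {new}" by blast
    then have "card (restr (CC m) Lm) \<le> card (X \<union> {new})" by (rule card_mono[rotated]) simp
    also have "\<dots> \<le> card X + 1" using card_Un_le[of X "{new}"] by simp
    finally have le: "card (restr (CC m) Lm) \<le> dd" using card_X dd2 by simp
    have "card (restr (C' i0) Lm) \<le> 1" using hom_at[OF hom Lm] le i0(1) by force
    moreover have "{I p, new} \<subseteq> restr (C' i0) Lm"
    proof -
      have "dsub (I p) Lm" unfolding Lm_def using I_in[OF p(1) idx] .
      moreover have "dsub new Lm" unfolding Lm_def new_def using J_in[of "n-m+1" "n-m+2"] k0 m by auto
      ultimately show ?thesis using Ip i0 by (auto simp: restr_def)
    qed
    moreover have "finite (restr (C' i0) Lm)"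
    proof -
      have "restr (C' i0) Lm \<subseteq> CC m" using UC' i0 by (auto simp: restr_def)
      then show ?thesis by (rule finite_subset) simp
    qed
    moreover have "I p \<noteq> new"
    proof -
      have "I p \<in> X" using p(1) by (rule imageI)
      then show ?thesis using J_notX[OF k0] unfolding new_def by metis
    qed
    ultimately have "2 \<le> card (restr (C' i0) Lm)" using card_mono[of "restr (C' i0) Lm" "{I p, new}"] by simp
    then show False using \<open>card (restr (C' i0) Lm) \<le> 1\<close> by simp
  qed
  then have newc: "new \<in> C' c" using i0 by simp
  have eqs: "\<forall>i\<in>{1..dd}. C' i = (if i = c then C c \<union> {new} else C i)"
  proof
    fix i assume ii: "i \<in> {1..dd}"
    show "C' i = (if i = c then C c \<union> {new} else C i)"
    proof (cases "i = c")
      case True then show ?thesis using st1[OF ii] ext'[OF ii] newc by auto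
    next
      case False
      then have "new \<notin> C' i" using dC'[OF ii c False] newc by blast
      then show ?thesis using st1[OF ii] ext'[OF ii] False by auto
    qed
  qed
  have "C' c = J ` {n-m+1..n+1}" using eqs c Cc interval_split[OF m] unfolding new_def by auto
  moreover have "\<forall>i\<in>{1..dd}. i \<noteq> c \<longrightarrow> (\<exists>p\<in>{1..dd-1}. C' i = {I p})" using eqs oth by auto
  ultimately have "canon m C' c" unfolding canon_def using c colC' by blast
  then show ?thesis using eqs unfolding new_def by blast
qed


lemma CC0: "CC 0 = insert (J (n+1)) X" by auto

lemma card_CC0: "card (CC 0) = dd"
proof -
  have "J (n+1) \<notin> X" using J_notX[of "n+1"] by simp
  then have "card (insert (J (n+1)) X) = dd - 1 + 1" using card_X by simp
  then show ?thesis using CC0 dd2 by simp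
qed

lemma Base:
  assumes hom: "homogeneous eta dd j (CC 0) C'"
  shows "\<exists>c. canon 0 C' c"
proof -
  have colC': "colouring dd (CC 0) C'" using hom unfolding homogeneous_def by blast
  have UC': "(\<Union>i\<in>{1..dd}. C' i) = CC 0" using colC' unfolding colouring_def by blast
  have dC': "\<And>i i'. i \<in> {1..dd} \<Longrightarrow> i' \<in> {1..dd} \<Longrightarrow> i \<noteq> i' \<Longrightarrow> C' i \<inter> C' i' = {}"
    using colC' unfolding colouring_def by blast
  have sub: "C' i \<subseteq> CC 0" if "i \<in> {1..dd}" for i using UC' that by blast
  have e: "restr (CC 0) (0,0) = CC 0" by (rule restr_all) (rule CC_sub)
  have "\<not> card (restr (CC 0) (0,0)) > dd" unfolding e card_CC0 by simp
  then have R: "\<forall>i\<in>{1..dd}. card (restr (C' i) (0,0)) \<le> 1"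
    using hom_at[OF hom top_ok] by blast
  have le1: "card (C' i) \<le> 1" if ii: "i \<in> {1..dd}" for i
  proof -
    have "C' i \<subseteq> Dlev j" by (rule subset_trans[OF sub[OF ii] CC_sub])
    then have eq: "restr (C' i) (0,0) = C' i" by (rule restr_all)
    have "card (restr (C' i) (0,0)) \<le> 1" using R ii by blast
    then show ?thesis unfolding eq .
  qed
  have finC: "finite (C' i)" if ii: "i \<in> {1..dd}" for i
    by (rule finite_subset[OF sub[OF ii]]) simp
  have "J (n+1) \<in> CC 0" using CC0 by blast
  then obtain c where c: "c \<in> {1..dd}" "J (n+1) \<in> C' c" using UC' by blast
  have "\<forall>a1\<in>C' c. \<forall>a2\<in>C' c. a1 = a2"
    using le1[OF c(1)] card_le_Suc0_iff_eq[OF finC[OF c(1)]] by simp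
  then have Cc: "C' c = {J (n+1)}" using c(2) by blast
  have JX: "J (n+1) \<notin> X" using J_notX[of "n+1"] by simp
  have subX: "C' i \<subseteq> X" if ii: "i \<in> {1..dd}" "i \<noteq> c" for i
  proof
    fix x assume x: "x \<in> C' i"
    then have "x \<in> insert (J (n+1)) X" using sub[OF ii(1)] unfolding CC0 by blast
    moreover have "x \<noteq> J (n+1)" using dC'[OF ii(1) c(1) ii(2)] c(2) x by blast
    ultimately show "x \<in> X" by blast
  qed
  have ne: "C' i \<noteq> {}" if ii: "i \<in> {1..dd}" "i \<noteq> c" for i
  proof
    assume e: "C' i = {}"
    define K where "K = {1..dd} - {c, i}"
    have "X \<subseteq> (\<Union>i'\<in>K. C' i')"
    proof
      fix x assume xX: "x \<in> X"
      then have "x \<in> CC 0" unfolding CC0 by blast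
      then obtain i2 where i2: "i2 \<in> {1..dd}" "x \<in> C' i2" using UC' by blast
      have "i2 \<noteq> c"
      proof
        assume "i2 = c"
        then have "x = J (n+1)" using i2(2) Cc by blast
        then show False using xX JX by simp
      qed
      moreover have "i2 \<noteq> i" using i2 e by auto
      ultimately show "x \<in> (\<Union>i'\<in>K. C' i')" using i2 unfolding K_def by blast
    qed
    then have "card X \<le> card (\<Union>i'\<in>K. C' i')"
      by (rule card_mono[rotated]) (use finC K_def in auto)
    also have "\<dots> \<le> (\<Sum>i'\<in>K. card (C' i'))" by (rule card_UN_le) (simp add: K_def)
    also have "\<dots> \<le> card K"
    proof -
      have "\<And>i'. i' \<in> K \<Longrightarrow> card (C' i') \<le> 1" using le1 unfolding K_def by blast
      then have "(\<Sum>i'\<in>K. card (C' i')) \<le> of_nat (card K) * 1" by (rule sum_bounded_above)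
      then show ?thesis by simp
    qed
    also have "card K = dd - 2"
    proof -
      have "card {c, i} = 2" using ii by simp
      then show ?thesis unfolding K_def using c(1) ii by (subst card_Diff_subset) auto
    qed
    finally have "card X \<le> dd - 2" by simp
    then show False using card_X dd2 by simp
  qed
  have "\<forall>i\<in>{1..dd}. i \<noteq> c \<longrightarrow> (\<exists>p\<in>{1..dd-1}. C' i = {I p})"
  proof (intro ballI impI)
    fix i assume ii: "i \<in> {1..dd}" "i \<noteq> c"
    obtain x where x: "x \<in> C' i" using ne[OF ii] by blast
    have "\<forall>a1\<in>C' i. \<forall>a2\<in>C' i. a1 = a2"
      using le1[OF ii(1)] card_le_Suc0_iff_eq[OF finC[OF ii(1)]] by simp
    then have "C' i = {x}" using x by blast
    moreover obtain p where "p \<in> {1..dd-1}" "x = I p" using subX[OF ii] x by blast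
    ultimately show "\<exists>p\<in>{1..dd-1}. C' i = {I p}" by blast
  qed
  moreover have "C' c = J ` {n-0+1..n+1}" using Cc by simp
  ultimately have "canon 0 C' c" unfolding canon_def using c(1) colC' by blast
  then show ?thesis by blast
qed

lemma Fail: assumes can: "canon n C c" shows "\<not> homogeneous (1 / real n) dd j (CC n) C"
proof
  assume hom: "homogeneous (1 / real n) dd j (CC n) C"
  have c: "c \<in> {1..dd}" and Cc: "C c = J ` {1..n+1}"
    and oth: "\<forall>i\<in>{1..dd}. i \<noteq> c \<longrightarrow> (\<exists>p\<in>{1..dd-1}. C i = {I p})"
    and col: "colouring dd (CC n) C" using can unfolding canon_def by auto
  have UC: "(\<Union>i\<in>{1..dd}. C i) = CC n" using col unfolding colouring_def by blast
  have sub: "C i \<subseteq> CC n" if "i \<in> {1..dd}" for i using UC that by blast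
  have rC: "restr (C i) (0,0) = C i" if "i \<in> {1..dd}" for i
    using restr_all[of "C i"] sub[OF that] CC_sub by blast
  have cardJ: "card (J ` {1..n+1}) = n + 1" using J_inj by (simp add: card_image)
  have "CC n = X \<union> J ` {1..n+1}" by simp
  moreover have "X \<inter> J ` {1..n+1} = {}" by (rule Jset_disj) simp
  ultimately have "card (CC n) = (dd - 1) + (n + 1)" using card_X cardJ by (simp add: card_Un_disjoint)
  moreover have e: "restr (CC n) (0,0) = CC n" by (rule restr_all) (rule CC_sub)
  ultimately have gt: "card (restr (CC n) (0,0)) > dd" using dd2 n1 by simp
  let ?V = "(\<lambda>i. real (card (restr (C i) (0,0)))) ` {1..dd}"
  have ineq: "(1 / real n) * Max ?V \<le> Min ?V"
    using hom_at[OF hom top_ok] gt by force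
  have fin: "finite ?V" by simp
  have "real (card (restr (C c) (0,0))) = real (n+1)" using rC[OF c] Cc cardJ by simp
  moreover have "real (card (restr (C c) (0,0))) \<le> Max ?V" by (rule Max_ge[OF fin]) (use c in blast)
  ultimately have mx: "real (n+1) \<le> Max ?V" by simp
  define i' :: nat where "i' = (if c = 1 then 2 else 1)"
  have i': "i' \<in> {1..dd}" "i' \<noteq> c" using dd2 c unfolding i'_def by auto
  obtain p where "C i' = {I p}" using oth i' by blast
  then have "real (card (restr (C i') (0,0))) = 1" using rC[OF i'(1)] by simp
  moreover have "Min ?V \<le> real (card (restr (C i') (0,0)))" by (rule Min_le[OF fin]) (use i' in blast)
  ultimately have mn: "Min ?V \<le> 1" by simp
  have "(1 / real n) * real (n+1) \<le> (1 / real n) * Max ?V"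
    by (rule mult_left_mono[OF mx]) simp
  then have "(1 / real n) * real (n+1) \<le> 1" using ineq mn by linarith
  then have "real (n+1) \<le> real n" using n1 by (simp add: field_simps)
  then show False by simp
qed

lemma Chain: assumes sc: "stage_chain eta dd j CC Cs K" and K: "K \<le> n"
  shows "m \<le> K \<Longrightarrow> \<exists>c. canon m (Cs m) c"
proof (induction m)
  case 0
  have "homogeneous eta dd j (CC 0) (Cs 0)" using sc unfolding stage_chain_def by (rule conjunct1)
  then show ?case by (rule Base)
next
  case (Suc m)
  have "m \<le> K" using Suc.prems by simp
  then obtain c where cm: "canon m (Cs m) c" using Suc.IH by blast
  have sK: "Suc m \<in> {1..K}" using Suc.prems by simp
  have "\<forall>m\<in>{1..K}. homogeneous eta dd j (CC m) (Cs m) \<and> extends_col dd (Cs (m - 1)) (Cs m)"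
    using sc unfolding stage_chain_def by (rule conjunct2)
  then have "homogeneous eta dd j (CC (Suc m)) (Cs (Suc m)) \<and>
    extends_col dd (Cs (Suc m - 1)) (Cs (Suc m))" using sK by (rule bspec)
  then have h: "homogeneous eta dd j (CC (Suc m)) (Cs (Suc m))"
    and e: "extends_col dd (Cs m) (Cs (Suc m))" by simp_all
  have sm: "Suc m \<in> {1..n}" using Suc.prems K by auto
  have "canon (Suc m - 1) (Cs m) c" using cm by simp
  from Force[OF sm this h e] have "canon (Suc m) (Cs (Suc m)) c" by (rule conjunct1)
  then show ?case by (rule exI)
qed


lemma Ext: assumes m: "m \<in> {1..n}" and can: "canon (m-1) C c"
  shows "canon m (C(c := C c \<union> {J (n-m+1)})) c"
proof -
  define new where "new = J (n-m+1)"
  define C2 where "C2 = C(c := C c \<union> {new})"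
  have k0: "n-m+1 \<in> {1..n+1}" using m by auto
  have CCm: "CC m = CC (m-1) \<union> {new}" unfolding new_def using interval_split[OF m] by auto
  have c: "c \<in> {1..dd}" and Cc: "C c = J ` {n-(m-1)+1..n+1}"
    and oth: "\<forall>i\<in>{1..dd}. i \<noteq> c \<longrightarrow> (\<exists>p\<in>{1..dd-1}. C i = {I p})"
    and colC: "colouring dd (CC (m-1)) C" using can unfolding canon_def by auto
  have UC: "(\<Union>i\<in>{1..dd}. C i) = CC (m-1)" using colC unfolding colouring_def by blast
  have dC: "\<And>i i'. i \<in> {1..dd} \<Longrightarrow> i' \<in> {1..dd} \<Longrightarrow> i \<noteq> i' \<Longrightarrow> C i \<inter> C i' = {}"
    using colC unfolding colouring_def by blast
  have newX: "new \<notin> X" unfolding new_def using J_notX[OF k0] .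
  have newnot: "new \<notin> C i" if ii: "i \<in> {1..dd}" "i \<noteq> c" for i
  proof -
    obtain p where p: "p \<in> {1..dd-1}" "C i = {I p}" using oth ii by blast
    have "I p \<in> X" using p(1) by (rule imageI)
    then show ?thesis using newX p(2) by auto
  qed
  have "(\<Union>i\<in>{1..dd}. C2 i) = (\<Union>i\<in>{1..dd}. C i) \<union> {new}"
  proof
    show "(\<Union>i\<in>{1..dd}. C2 i) \<subseteq> (\<Union>i\<in>{1..dd}. C i) \<union> {new}"
      unfolding C2_def by (auto split: if_splits)
    show "(\<Union>i\<in>{1..dd}. C i) \<union> {new} \<subseteq> (\<Union>i\<in>{1..dd}. C2 i)"
    proof
      fix x assume "x \<in> (\<Union>i\<in>{1..dd}. C i) \<union> {new}"
      then consider "x = new" | i where "i \<in> {1..dd}" "x \<in> C i" by blast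
      then show "x \<in> (\<Union>i\<in>{1..dd}. C2 i)"
      proof cases
        case 1 then show ?thesis using c unfolding C2_def by auto
      next
        case 2 then show ?thesis unfolding C2_def by (cases "i = c") auto
      qed
    qed
  qed
  then have U2: "(\<Union>i\<in>{1..dd}. C2 i) = CC m" using UC CCm by simp
  have d2: "C2 i \<inter> C2 i' = {}" if ii: "i \<in> {1..dd}" "i' \<in> {1..dd}" "i \<noteq> i'" for i i'
  proof (cases "i = c")
    case True
    then have "i' \<noteq> c" using ii by simp
    then show ?thesis unfolding C2_def using True dC[OF ii] newnot[OF ii(2)] by auto
  next
    case False
    show ?thesis
    proof (cases "i' = c")
      case True
      then show ?thesis unfolding C2_def using False dC[OF ii] newnot[OF ii(1) False] by auto
    next
      case F2: False
      then show ?thesis unfolding C2_def using False dC[OF ii] by auto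
    qed
  qed
  have "colouring dd (CC m) C2" unfolding colouring_def using U2 d2 by blast
  moreover have "C2 c = J ` {n-m+1..n+1}" unfolding C2_def new_def
    using Cc interval_split[OF m] by auto
  moreover have "\<forall>i\<in>{1..dd}. i \<noteq> c \<longrightarrow> (\<exists>p\<in>{1..dd-1}. C2 i = {I p})"
    using oth unfolding C2_def by auto
  ultimately have "canon m C2 c" unfolding canon_def using c by blast
  then show ?thesis unfolding C2_def new_def .
qed

definition C0 :: "nat \<Rightarrow> dyadic set" where
  "C0 i = (if i = dd then {J (n+1)} else {I i})"

lemma canon_C0: "canon 0 C0 dd"
proof -
  have dd: "dd \<in> {1..dd}" using dd2 by simp
  have U: "(\<Union>i\<in>{1..dd}. C0 i) = CC 0"
  proof -
    have "{1..dd} = insert dd {1..dd-1}" using dd2 by auto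
    then have "(\<Union>i\<in>{1..dd}. C0 i) = C0 dd \<union> (\<Union>i\<in>{1..dd-1}. C0 i)" by simp
    also have "(\<Union>i\<in>{1..dd-1}. C0 i) = X"
    proof -
      have "C0 i = {I i}" if "i \<in> {1..dd-1}" for i using that dd2 unfolding C0_def by auto
      then show ?thesis by auto
    qed
    finally show ?thesis unfolding CC0 C0_def by auto
  qed
  have D: "C0 i \<inter> C0 i' = {}" if ii: "i \<in> {1..dd}" "i' \<in> {1..dd}" "i \<noteq> i'" for i i'
  proof -
    have JX: "J (n+1) \<notin> X" using J_notX[of "n+1"] by simp
    have XI: "I p \<in> X" if "p \<in> {1..dd} - {dd}" for p using that by auto
    show ?thesis
    proof (cases "i = dd")
      case True
      then have "i' \<in> {1..dd} - {dd}" using ii by auto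
      then have "I i' \<in> X" "i' \<noteq> dd" by (rule XI, simp)
      then show ?thesis unfolding C0_def using True JX by auto
    next
      case False
      show ?thesis
      proof (cases "i' = dd")
        case True
        then have "i \<in> {1..dd} - {dd}" using ii False by auto
        then have "I i \<in> X" by (rule XI)
        then show ?thesis unfolding C0_def using True False JX by auto
      next
        case F2: False
        have "i \<in> {1..dd-1}" "i' \<in> {1..dd-1}" using ii False F2 by auto
        then have "I i \<noteq> I i'" using Iinj ii(3) by (meson inj_on_contraD)
        then show ?thesis unfolding C0_def using False F2 by auto
      qed
    qed
  qed
  have "colouring dd (CC 0) C0" unfolding colouring_def using U D by blast
  moreover have "\<forall>i\<in>{1..dd}. i \<noteq> dd \<longrightarrow> (\<exists>p\<in>{1..dd-1}. C0 i = {I p})"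
  proof (intro ballI impI)
    fix i assume "i \<in> {1..dd}" "i \<noteq> dd"
    then have "i \<in> {1..dd-1}" "C0 i = {I i}" unfolding C0_def by auto
    then show "\<exists>p\<in>{1..dd-1}. C0 i = {I p}" by blast
  qed
  ultimately show ?thesis unfolding canon_def using dd dd2 by (simp add: C0_def)
qed

lemma perm: assumes "canon 0 C' c'" shows "perm_equiv dd C0 C'"
proof -
  have c': "c' \<in> {1..dd}" and Cc: "C' c' = J ` {n-0+1..n+1}"
    and oth: "\<forall>i\<in>{1..dd}. i \<noteq> c' \<longrightarrow> (\<exists>p\<in>{1..dd-1}. C' i = {I p})"
    and col: "colouring dd (CC 0) C'" using assms unfolding canon_def by auto
  have dC: "\<And>i i'. i \<in> {1..dd} \<Longrightarrow> i' \<in> {1..dd} \<Longrightarrow> i \<noteq> i' \<Longrightarrow> C' i \<inter> C' i' = {}"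
    using col unfolding colouring_def by blast
  define \<sigma> where "\<sigma> i = (if i = c' then dd else (SOME p. p \<in> {1..dd-1} \<and> C' i = {I p}))" for i
  have sig: "\<sigma> i \<in> {1..dd} \<and> C' i = C0 (\<sigma> i)" if ii: "i \<in> {1..dd}" for i
  proof (cases "i = c'")
    case True then show ?thesis using Cc dd2 unfolding \<sigma>_def C0_def by simp
  next
    case False
    then have "\<exists>p. p \<in> {1..dd-1} \<and> C' i = {I p}" using oth ii by blast
    then have "(SOME p. p \<in> {1..dd-1} \<and> C' i = {I p}) \<in> {1..dd-1} \<and>
        C' i = {I (SOME p. p \<in> {1..dd-1} \<and> C' i = {I p})}" by (rule someI_ex)
    moreover have "\<sigma> i = (SOME p. p \<in> {1..dd-1} \<and> C' i = {I p})" unfolding \<sigma>_def using False by simp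
    ultimately have "\<sigma> i \<in> {1..dd-1} \<and> C' i = {I (\<sigma> i)}" by simp
    moreover then have "\<sigma> i \<noteq> dd" using dd2 by auto
    ultimately show ?thesis unfolding C0_def by auto
  qed
  have inj: "inj_on \<sigma> {1..dd}"
  proof (rule inj_onI)
    fix i i' assume ii: "i \<in> {1..dd}" "i' \<in> {1..dd}" "\<sigma> i = \<sigma> i'"
    then have eq: "C' i = C' i'" using sig by metis
    have "C' i \<noteq> {}" using sig[OF ii(1)] unfolding C0_def by auto
    then show "i = i'" using dC[OF ii(1,2)] eq by auto
  qed
  have "\<sigma> ` {1..dd} \<subseteq> {1..dd}" using sig by blast
  then have "\<sigma> ` {1..dd} = {1..dd}" using endo_inj_surj[OF _ _ inj] by simp
  then have "bij_betw \<sigma> {1..dd} {1..dd}" using inj unfolding bij_betw_def by blast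
  then show ?thesis unfolding perm_equiv_def using sig by blast
qed

lemma main:
  "(\<forall>k\<in>{1..n}. CC (k - 1) \<subseteq> CC k)
    \<and> (\<exists>C. homogeneous (1 / real n) dd j (CC 0) C \<and>
          (\<forall>C'. homogeneous (1 / real n) dd j (CC 0) C' \<longrightarrow> perm_equiv dd C C'))
    \<and> (\<forall>k\<in>{1..n - 1}. \<forall>Cs. stage_chain (1 / real n) dd j CC Cs (k - 1) \<longrightarrow>
          (\<exists>C. homogeneous (1 / real n) dd j (CC k) C \<and> extends_col dd (Cs (k - 1)) C \<and>
             (\<forall>C'. homogeneous (1 / real n) dd j (CC k) C' \<and> extends_col dd (Cs (k - 1)) C'
                \<longrightarrow> (\<forall>i\<in>{1..dd}. C' i = C i))))
    \<and> (\<forall>Cs. stage_chain (1 / real n) dd j CC Cs (n - 1) \<longrightarrow>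
          \<not> (\<exists>C. homogeneous (1 / real n) dd j (CC n) C \<and> extends_col dd (Cs (n - 1)) C))"
proof (intro conjI)
  show "\<forall>k\<in>{1..n}. CC (k - 1) \<subseteq> CC k"
  proof
    fix k assume "k \<in> {1..n}"
    have "n - k + 1 \<le> n - (k - 1) + 1" by arith
    then have "{n - (k - 1) + 1..n + 1} \<subseteq> {n - k + 1..n + 1}" by auto
    then show "CC (k - 1) \<subseteq> CC k" by blast
  qed
  show "\<exists>C. homogeneous (1 / real n) dd j (CC 0) C \<and>
          (\<forall>C'. homogeneous (1 / real n) dd j (CC 0) C' \<longrightarrow> perm_equiv dd C C')"
  proof (intro exI conjI allI impI)
    show "homogeneous (1 / real n) dd j (CC 0) C0" using Hom[OF canon_C0] n1 by simp
  next
    fix C' assume "homogeneous (1 / real n) dd j (CC 0) C'"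
    then obtain c' where "canon 0 C' c'" using Base by blast
    then show "perm_equiv dd C0 C'" by (rule perm)
  qed
  show "\<forall>k\<in>{1..n - 1}. \<forall>Cs. stage_chain (1 / real n) dd j CC Cs (k - 1) \<longrightarrow>
          (\<exists>C. homogeneous (1 / real n) dd j (CC k) C \<and> extends_col dd (Cs (k - 1)) C \<and>
             (\<forall>C'. homogeneous (1 / real n) dd j (CC k) C' \<and> extends_col dd (Cs (k - 1)) C'
                \<longrightarrow> (\<forall>i\<in>{1..dd}. C' i = C i)))"
  proof (intro ballI allI impI)
    fix k Cs assume k: "k \<in> {1..n - 1}" and sc: "stage_chain (1 / real n) dd j CC Cs (k - 1)"
    have km: "k \<in> {1..n}" using k by auto
    have "k \<le> n - 1" using k by simp
    then have kn: "k - 1 \<le> n" by presburger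
    obtain c where can: "canon (k-1) (Cs (k-1)) c" using Chain[OF sc kn order_refl] by blast
    define C where "C = (Cs (k-1))(c := Cs (k-1) c \<union> {J (n-k+1)})"
    have cC: "canon k C c" unfolding C_def by (rule Ext[OF km can])
    show "\<exists>C. homogeneous (1 / real n) dd j (CC k) C \<and> extends_col dd (Cs (k - 1)) C \<and>
             (\<forall>C'. homogeneous (1 / real n) dd j (CC k) C' \<and> extends_col dd (Cs (k - 1)) C'
                \<longrightarrow> (\<forall>i\<in>{1..dd}. C' i = C i))"
    proof (intro exI conjI allI impI)
      show "homogeneous (1 / real n) dd j (CC k) C" using Hom[OF cC] k by auto
      show "extends_col dd (Cs (k - 1)) C" unfolding extends_col_def C_def by auto
    next
      fix C' assume h: "homogeneous (1 / real n) dd j (CC k) C' \<and> extends_col dd (Cs (k - 1)) C'"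
      have "\<forall>i\<in>{1..dd}. C' i = (if i = c then Cs (k-1) c \<union> {J (n-k+1)} else Cs (k-1) i)"
        using Force[OF km can, of "1 / real n" C'] h by blast
      then show "\<forall>i\<in>{1..dd}. C' i = C i" unfolding C_def by auto
    qed
  qed
  show "\<forall>Cs. stage_chain (1 / real n) dd j CC Cs (n - 1) \<longrightarrow>
          \<not> (\<exists>C. homogeneous (1 / real n) dd j (CC n) C \<and> extends_col dd (Cs (n - 1)) C)"
  proof (intro allI impI notI)
    fix Cs assume sc: "stage_chain (1 / real n) dd j CC Cs (n - 1)"
      and ex: "\<exists>C. homogeneous (1 / real n) dd j (CC n) C \<and> extends_col dd (Cs (n - 1)) C"
    have kn: "n - 1 \<le> n" by simp
    obtain c where can: "canon (n-1) (Cs (n-1)) c" using Chain[OF sc kn order_refl] by blast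
    obtain C where h: "homogeneous (1 / real n) dd j (CC n) C" "extends_col dd (Cs (n - 1)) C"
      using ex by blast
    have nn: "n \<in> {1..n}" using n1 by simp
    have "canon n C c" using Force[OF nn can h(1) h(2)] by (rule conjunct1)
    then show False using Fail h(1) by blast
  qed
qed

end

theorem proposition3p1:
  fixes a n j :: nat and L I J :: "nat \<Rightarrow> dyadic"
    and d :: nat and \<eta> :: real and Cc :: "nat \<Rightarrow> dyadic set"
  defines "d \<equiv> 2 ^ a"
    and "\<eta> \<equiv> 1 / real n"
    and "Cc \<equiv> (\<lambda>k. I ` {1..d - 1} \<union> J ` {n - k + 1..n + 1})"
  assumes "a \<ge> 1" and "n \<ge> 1" and "j \<ge> n + a + 1"
    and "\<forall>i\<in>{1..n + 2}. L i \<in> Dlev (j + 1 - a - i)"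
    and "\<forall>i\<in>{1..n + 1}. dsub (L i) (L (i + 1))"
    and "inj_on I {1..d - 1}"
    and "\<forall>i\<in>{1..d - 1}. I i \<in> Dlev j \<and> dsub (I i) (L 1)"
    and "\<forall>i\<in>{1..n + 1}. J i \<in> Dlev j \<and> dsub (J i) (brother (L i))"
  shows "(\<forall>k\<in>{1..n}. Cc (k - 1) \<subseteq> Cc k)
    \<and> (\<exists>C. homogeneous \<eta> d j (Cc 0) C \<and>
          (\<forall>C'. homogeneous \<eta> d j (Cc 0) C' \<longrightarrow> perm_equiv d C C'))
    \<and> (\<forall>k\<in>{1..n - 1}. \<forall>Cs. stage_chain \<eta> d j Cc Cs (k - 1) \<longrightarrow>
          (\<exists>C. homogeneous \<eta> d j (Cc k) C \<and> extends_col d (Cs (k - 1)) C \<and>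
             (\<forall>C'. homogeneous \<eta> d j (Cc k) C' \<and> extends_col d (Cs (k - 1)) C'
                \<longrightarrow> (\<forall>i\<in>{1..d}. C' i = C i))))
    \<and> (\<forall>Cs. stage_chain \<eta> d j Cc Cs (n - 1) \<longrightarrow>
          \<not> (\<exists>C. homogeneous \<eta> d j (Cc n) C \<and> extends_col d (Cs (n - 1)) C))"
proof -
  have P: "P31 a n j L I J" unfolding P31_def using assms[unfolded d_def] by blast
  interpret P31 a n j L I J by (rule P)
  show ?thesis unfolding Cc_def \<eta>_def d_def by (rule main)
qed

end
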